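(* Let $(X_1,Y_1),\dots,(X_{n+1},Y_{n+1})$ be data with $L_i=\mathcal{L}(f,X_i,Y_i)\in[0,1]$, $s:\mathcal{X}\to[0,1]$ a score, $w:\mathcal{X}\to(0,\infty)$ a weight function, $\alpha,\gamma\in(0,1)$, and $E_{\gamma,n+1}$ the weighted e-value below. If $\gamma\le\alpha$, then $$\mathbf{1}\{E_{\gamma,n+1}\ge1/\alpha\}=\mathbf{1}\Big\{\frac{w(X_{n+1})+\sum_{i=1}^nw(X_i)L_i\mathbf{1}\{s(X_i)\le s(X_{n+1})\}}{\sum_{i=1}^{n+1}w(X_i)}\le\gamma\Big\}.$$ If $\gamma>\alpha$, then $E_{\gamma,n+1}\ge1/\alpha$ if and only if both $\frac{w(X_{n+1})+\sum_{i=1}^nw(X_i)L_i\mathbf{1}\{s(X_i)\le s(X_{n+1})\}}{\sum_{i=1}^{n+1}w(X_i)}\le\gamma$ and, for all $t\in\mathcal{M}$ and $\ell\in[0,1]$, $\frac{\ell w(X_{n+1})+\sum_{i=1}^nw(X_i)L_i\mathbf{1}\{s(X_i)\le t\}}{\sum_{i=1}^{n+1}w(X_i)}\notin(\alpha,\gamma]$.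
   Context: Let $w_i=w(X_i)$, $\mathcal{M}=\{s(X_i)\}_{i=1}^{n+1}$, $F(t;\ell)=\frac{\sum_{i=1}^nw_iL_i\mathbf{1}\{s(X_i)\le t\}+w_{n+1}\ell\mathbf{1}\{s(X_{n+1})\le t\}}{\sum_{i=1}^{n+1}w_i}$, $t_\gamma(\ell)=\max\{t\in\mathcal{M}:F(t;\ell)\le\gamma\}$ ($\max\emptyset=-\infty$), and $E_{\gamma,n+1}=\inf_{\ell\in[0,1]}\frac{\mathbf{1}\{s(X_{n+1})\le t_\gamma(\ell)\}\sum_{i=1}^{n+1}w_i}{\sum_{i=1}^nw_iL_i\mathbf{1}\{s(X_i)\le t_\gamma(\ell)\}+w_{n+1}\ell\mathbf{1}\{s(X_{n+1})\le t_\gamma(\ell)\}}$, each ratio $0$ when its numerator is $0$ and $+\infty$ when the numerator is positive and the denominator $0$; $E_{\gamma,n+1}=0$ if $\inf_\ell t_\gamma(\ell)=-\infty$. *)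

theory Defs
  imports "HOL-Analysis.Analysis"
begin

text \<open>Data are indexed by 1..n+1; the test point is index n+1 (= Suc n).
  X :: nat => 'x are the covariates, L :: nat => real the losses,
  s the score, w the weight function.\<close>

definition wtot :: "nat \<Rightarrow> (nat \<Rightarrow> 'x) \<Rightarrow> ('x \<Rightarrow> real) \<Rightarrow> real" where
  "wtot n X w = (\<Sum>i=1..Suc n. w (X i))"

definition Fw :: "nat \<Rightarrow> (nat \<Rightarrow> 'x) \<Rightarrow> (nat \<Rightarrow> real) \<Rightarrow> ('x \<Rightarrow> real) \<Rightarrow> ('x \<Rightarrow> real)
                  \<Rightarrow> real \<Rightarrow> real \<Rightarrow> real" where
  "Fw n X L s w t l =
     ((\<Sum>i=1..n. w (X i) * L i * of_bool (s (X i) \<le> t))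
      + w (X (Suc n)) * l * of_bool (s (X (Suc n)) \<le> t)) / wtot n X w"

definition Mset :: "nat \<Rightarrow> (nat \<Rightarrow> 'x) \<Rightarrow> ('x \<Rightarrow> real) \<Rightarrow> real set" where
  "Mset n X s = (\<lambda>i. s (X i)) ` {1..Suc n}"

definition tgam :: "nat \<Rightarrow> (nat \<Rightarrow> 'x) \<Rightarrow> (nat \<Rightarrow> real) \<Rightarrow> ('x \<Rightarrow> real) \<Rightarrow> ('x \<Rightarrow> real)
                  \<Rightarrow> real \<Rightarrow> real \<Rightarrow> ereal" where
  "tgam n X L s w \<gamma> l =
     (let T = {t \<in> Mset n X s. Fw n X L s w t l \<le> \<gamma>}
      in if T = {} then -\<infinity> else ereal (Max T))"

definition eratio :: "real \<Rightarrow> real \<Rightarrow> ereal" where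
  "eratio a b = (if a = 0 then 0 else if b = 0 then \<infinity> else ereal (a / b))"

definition Enum :: "nat \<Rightarrow> (nat \<Rightarrow> 'x) \<Rightarrow> (nat \<Rightarrow> real) \<Rightarrow> ('x \<Rightarrow> real) \<Rightarrow> ('x \<Rightarrow> real)
                  \<Rightarrow> real \<Rightarrow> real \<Rightarrow> real" where
  "Enum n X L s w \<gamma> l =
     of_bool (ereal (s (X (Suc n))) \<le> tgam n X L s w \<gamma> l) * wtot n X w"

definition Eden :: "nat \<Rightarrow> (nat \<Rightarrow> 'x) \<Rightarrow> (nat \<Rightarrow> real) \<Rightarrow> ('x \<Rightarrow> real) \<Rightarrow> ('x \<Rightarrow> real)
                  \<Rightarrow> real \<Rightarrow> real \<Rightarrow> real" where
  "Eden n X L s w \<gamma> l =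
     (\<Sum>i=1..n. w (X i) * L i * of_bool (ereal (s (X i)) \<le> tgam n X L s w \<gamma> l))
     + w (X (Suc n)) * l * of_bool (ereal (s (X (Suc n))) \<le> tgam n X L s w \<gamma> l)"

definition Eval :: "nat \<Rightarrow> (nat \<Rightarrow> 'x) \<Rightarrow> (nat \<Rightarrow> real) \<Rightarrow> ('x \<Rightarrow> real) \<Rightarrow> ('x \<Rightarrow> real)
                  \<Rightarrow> real \<Rightarrow> ereal" where
  "Eval n X L s w \<gamma> =
     (if (INF l\<in>{0..1}. tgam n X L s w \<gamma> l) = -\<infinity> then 0
      else (INF l\<in>{0..1}. eratio (Enum n X L s w \<gamma> l) (Eden n X L s w \<gamma> l)))"

end

theory Submission
  imports Defs
begin


lemma wtot_pos:
  assumes wpos: "\<forall>x. 0 < w x"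
  shows "0 < wtot n X w"
  unfolding wtot_def using wpos by (intro sum_pos) auto

lemma Fw_mono_t:
  assumes L01: "\<forall>i\<in>{1..Suc n}. 0 \<le> L i \<and> L i \<le> 1" and wpos: "\<forall>x. 0 < w x"
    and l: "0 \<le> l" and t: "t1 \<le> t2"
  shows "Fw n X L s w t1 l \<le> Fw n X L s w t2 l"
proof -
  have W: "0 < wtot n X w" using wtot_pos wpos by blast
  have "(\<Sum>i=1..n. w (X i) * L i * of_bool (s (X i) \<le> t1)) \<le> (\<Sum>i=1..n. w (X i) * L i * of_bool (s (X i) \<le> t2))"
  proof (rule sum_mono)
    fix i assume i: "i \<in> {1..n}"
    have "0 \<le> w (X i) * L i" using L01 wpos i by (simp add: less_imp_le)
    then show "w (X i) * L i * of_bool (s (X i) \<le> t1) \<le> w (X i) * L i * of_bool (s (X i) \<le> t2)"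
      using t by (auto intro: mult_left_mono)
  qed
  moreover have "w (X (Suc n)) * l * of_bool (s (X (Suc n)) \<le> t1) \<le> w (X (Suc n)) * l * of_bool (s (X (Suc n)) \<le> t2)"
    using t l wpos by (auto simp: less_imp_le)
  ultimately show ?thesis unfolding Fw_def using W by (intro divide_right_mono) auto
qed

lemma Fw_mono_l:
  assumes wpos: "\<forall>x. 0 < w x" and l: "l1 \<le> l2"
  shows "Fw n X L s w t l1 \<le> Fw n X L s w t l2"
proof -
  have W: "0 < wtot n X w" using wtot_pos wpos by blast
  have "w (X (Suc n)) * l1 * of_bool (s (X (Suc n)) \<le> t) \<le> w (X (Suc n)) * l2 * of_bool (s (X (Suc n)) \<le> t)"
    using l wpos by (auto simp: less_imp_le)
  then show ?thesis unfolding Fw_def using W by (intro divide_right_mono) auto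
qed

lemma Fw_nonneg:
  assumes L01: "\<forall>i\<in>{1..Suc n}. 0 \<le> L i \<and> L i \<le> 1" and wpos: "\<forall>x. 0 < w x"
    and l: "0 \<le> l"
  shows "0 \<le> Fw n X L s w t l"
proof -
  have W: "0 < wtot n X w" using wtot_pos wpos by blast
  have "0 \<le> (\<Sum>i=1..n. w (X i) * L i * of_bool (s (X i) \<le> t))"
    using L01 wpos by (intro sum_nonneg) (auto simp: less_imp_le)
  moreover have "0 \<le> w (X (Suc n)) * l * of_bool (s (X (Suc n)) \<le> t)"
    using l wpos by (auto simp: less_imp_le)
  ultimately show ?thesis unfolding Fw_def using W by auto
qed

lemma Mset_finite: "finite (Mset n X s)" unfolding Mset_def by auto

lemma S_in_M: "s (X (Suc n)) \<in> Mset n X s" unfolding Mset_def by auto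

lemma tgam_cases:
  "(tgam n X L s w \<gamma> l = -\<infinity> \<and> (\<forall>t\<in>Mset n X s. \<gamma> < Fw n X L s w t l)) \<or>
   (\<exists>m. tgam n X L s w \<gamma> l = ereal m \<and> m \<in> Mset n X s \<and> Fw n X L s w m l \<le> \<gamma> \<and>
        (\<forall>t\<in>Mset n X s. Fw n X L s w t l \<le> \<gamma> \<longrightarrow> t \<le> m))"
proof -
  define T where "T = {t \<in> Mset n X s. Fw n X L s w t l \<le> \<gamma>}"
  have fT: "finite T" unfolding T_def using Mset_finite[of n X s] by auto
  show ?thesis
  proof (cases "T = {}")
    case True
    then show ?thesis unfolding tgam_def T_def[symmetric] by (auto simp: T_def not_le)
  next
    case False
    have "Max T \<in> T" using Max_in[OF fT False] .
    moreover have "\<forall>t\<in>T. t \<le> Max T" using fT by auto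
    ultimately show ?thesis unfolding tgam_def T_def[symmetric] using False by (auto simp: T_def)
  qed
qed

lemma tgam_ge:
  assumes "t \<in> Mset n X s" "Fw n X L s w t l \<le> \<gamma>"
  shows "\<exists>m. tgam n X L s w \<gamma> l = ereal m \<and> m \<in> Mset n X s \<and> t \<le> m \<and> Fw n X L s w m l \<le> \<gamma>"
  using tgam_cases[of n X L s w \<gamma> l] assms by force

lemma P_iff:
  assumes L01: "\<forall>i\<in>{1..Suc n}. 0 \<le> L i \<and> L i \<le> 1" and wpos: "\<forall>x. 0 < w x"
    and l: "0 \<le> l" and alpha: "0 < \<alpha>"
  shows "ereal (1 / \<alpha>) \<le> eratio (Enum n X L s w \<gamma> l) (Eden n X L s w \<gamma> l) \<longleftrightarrow>
    (\<exists>m. tgam n X L s w \<gamma> l = ereal m \<and> s (X (Suc n)) \<le> m \<and> Fw n X L s w m l \<le> \<alpha>)"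
proof -
  have W: "0 < wtot n X w" using wtot_pos wpos by blast
  have ap: "0 < 1 / \<alpha>" using alpha by simp
  consider (ninf) "tgam n X L s w \<gamma> l = -\<infinity>" | (fin) m where "tgam n X L s w \<gamma> l = ereal m"
    using tgam_cases[of n X L s w \<gamma> l] by blast
  then show ?thesis
  proof cases
    case ninf
    then show ?thesis using ap unfolding eratio_def Enum_def by auto
  next
    case fin
    show ?thesis
    proof (cases "s (X (Suc n)) \<le> m")
      case False
      then show ?thesis using ap fin unfolding eratio_def Enum_def by auto
    next
      case True
      have En: "Enum n X L s w \<gamma> l = wtot n X w" unfolding Enum_def using fin True by simp
      have Ed: "Eden n X L s w \<gamma> l = wtot n X w * Fw n X L s w m l"
        unfolding Eden_def Fw_def using fin W by simp
      have F0: "0 \<le> Fw n X L s w m l" using Fw_nonneg[OF L01 wpos l] .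
      show ?thesis
      proof (cases "Fw n X L s w m l = 0")
        case True
        then show ?thesis using En Ed W fin \<open>s (X (Suc n)) \<le> m\<close> alpha
          unfolding eratio_def by auto
      next
        case False
        then have Fp: "0 < Fw n X L s w m l" using F0 by auto
        have r: "wtot n X w / (wtot n X w * Fw n X L s w m l) = 1 / Fw n X L s w m l"
          using W by simp
        have "(1 / \<alpha> \<le> 1 / Fw n X L s w m l) \<longleftrightarrow> Fw n X L s w m l \<le> \<alpha>"
          using Fp alpha by (simp add: field_simps)
        then show ?thesis using En Ed W fin True False r unfolding eratio_def by auto
      qed
    qed
  qed
qed

lemma Eval_iff:
  assumes L01: "\<forall>i\<in>{1..Suc n}. 0 \<le> L i \<and> L i \<le> 1" and wpos: "\<forall>x. 0 < w x"
    and alpha: "0 < \<alpha>"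
  shows "ereal (1 / \<alpha>) \<le> Eval n X L s w \<gamma> \<longleftrightarrow>
    (\<forall>l\<in>{0..1}. \<exists>m. tgam n X L s w \<gamma> l = ereal m \<and> s (X (Suc n)) \<le> m \<and> Fw n X L s w m l \<le> \<alpha>)"
proof -
  have ap: "0 < 1 / \<alpha>" using alpha by simp
  have P: "\<And>l. l \<in> {0..1} \<Longrightarrow> ereal (1 / \<alpha>) \<le> eratio (Enum n X L s w \<gamma> l) (Eden n X L s w \<gamma> l) \<longleftrightarrow>
    (\<exists>m. tgam n X L s w \<gamma> l = ereal m \<and> s (X (Suc n)) \<le> m \<and> Fw n X L s w m l \<le> \<alpha>)"
    using P_iff[OF L01 wpos _ alpha] by auto
  show ?thesis
  proof (cases "(INF l\<in>{0..1}. tgam n X L s w \<gamma> l) = -\<infinity>")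
    case True
    have "tgam n X L s w \<gamma> 1 = -\<infinity>"
    proof (rule ccontr)
      assume "tgam n X L s w \<gamma> 1 \<noteq> -\<infinity>"
      then obtain m where m: "tgam n X L s w \<gamma> 1 = ereal m" and mM: "m \<in> Mset n X s"
        and Fm: "Fw n X L s w m 1 \<le> \<gamma>"
        using tgam_cases[of n X L s w \<gamma> 1] by blast
      have "ereal m \<le> (INF l\<in>{0..1}. tgam n X L s w \<gamma> l)"
      proof (rule INF_greatest)
        fix l :: real assume "l \<in> {0..1}"
        then have "Fw n X L s w m l \<le> \<gamma>" using Fw_mono_l[OF wpos, of l 1 n X L s m] Fm by auto
        then show "ereal m \<le> tgam n X L s w \<gamma> l" using tgam_ge[OF mM] by force
      qed
      then show False using True by simp
    qed
    then have "\<not> (\<exists>m. tgam n X L s w \<gamma> 1 = ereal m \<and> s (X (Suc n)) \<le> m \<and> Fw n X L s w m 1 \<le> \<alpha>)"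
      by simp
    then show ?thesis using True ap unfolding Eval_def by force
  next
    case False
    then have "Eval n X L s w \<gamma> = (INF l\<in>{0..1}. eratio (Enum n X L s w \<gamma> l) (Eden n X L s w \<gamma> l))"
      unfolding Eval_def by simp
    then show ?thesis using P by (simp add: le_INF_iff)
  qed
qed



theorem propositionA1:
  fixes n :: nat and X :: "nat \<Rightarrow> 'x" and L :: "nat \<Rightarrow> real"
    and s :: "'x \<Rightarrow> real" and w :: "'x \<Rightarrow> real" and \<alpha> \<gamma> :: real
  assumes L01: "\<forall>i\<in>{1..Suc n}. 0 \<le> L i \<and> L i \<le> 1"
    and s01: "\<forall>x. 0 \<le> s x \<and> s x \<le> 1"
    and wpos: "\<forall>x. 0 < w x"
    and alpha: "0 < \<alpha>" "\<alpha> < 1"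
    and gamma: "0 < \<gamma>" "\<gamma> < 1"
  shows "(\<gamma> \<le> \<alpha> \<longrightarrow>
           ((ereal (1 / \<alpha>) \<le> Eval n X L s w \<gamma>) \<longleftrightarrow>
            (w (X (Suc n)) + (\<Sum>i=1..n. w (X i) * L i * of_bool (s (X i) \<le> s (X (Suc n)))))
              / (\<Sum>i=1..Suc n. w (X i)) \<le> \<gamma>))
       \<and> (\<alpha> < \<gamma> \<longrightarrow>
           ((ereal (1 / \<alpha>) \<le> Eval n X L s w \<gamma>) \<longleftrightarrow>
            ((w (X (Suc n)) + (\<Sum>i=1..n. w (X i) * L i * of_bool (s (X i) \<le> s (X (Suc n)))))
               / (\<Sum>i=1..Suc n. w (X i)) \<le> \<gamma>
             \<and> (\<forall>t\<in>Mset n X s. \<forall>l\<in>{0..1::real}.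
                  (l * w (X (Suc n)) + (\<Sum>i=1..n. w (X i) * L i * of_bool (s (X i) \<le> t)))
                    / (\<Sum>i=1..Suc n. w (X i)) \<notin> {\<alpha><..\<gamma>}))))"

proof -
  let ?S = "s (X (Suc n))"
  let ?F = "Fw n X L s w"
  let ?Q = "\<forall>l\<in>{0..1::real}. \<exists>m. tgam n X L s w \<gamma> l = ereal m \<and> ?S \<le> m \<and> ?F m l \<le> \<alpha>"
  have Wd: "(\<Sum>i=1..Suc n. w (X i)) = wtot n X w" by (simp add: wtot_def)
  have W: "0 < wtot n X w" using wtot_pos wpos by blast
  have SM: "?S \<in> Mset n X s" by (rule S_in_M)
  have Ad: "(w (X (Suc n)) + (\<Sum>i=1..n. w (X i) * L i * of_bool (s (X i) \<le> ?S))) / wtot n X w = ?F ?S 1"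
    unfolding Fw_def by simp
  have Gd: "\<And>t (l::real). (l * w (X (Suc n)) + (\<Sum>i=1..n. w (X i) * L i * of_bool (s (X i) \<le> t))) / wtot n X w
     = ((\<Sum>i=1..n. w (X i) * L i * of_bool (s (X i) \<le> t)) + w (X (Suc n)) * l) / wtot n X w"
    by (simp add: algebra_simps)
  have GF: "\<And>t (l::real). ?S \<le> t \<Longrightarrow> ((\<Sum>i=1..n. w (X i) * L i * of_bool (s (X i) \<le> t)) + w (X (Suc n)) * l) / wtot n X w = ?F t l"
    unfolding Fw_def by simp
  have GleS: "\<And>t (l::real). t < ?S \<Longrightarrow> 0 \<le> l \<Longrightarrow> ((\<Sum>i=1..n. w (X i) * L i * of_bool (s (X i) \<le> t)) + w (X (Suc n)) * l) / wtot n X w \<le> ?F ?S l"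
  proof -
    fix t and l :: real assume t: "t < ?S" and l: "0 \<le> l"
    have "(\<Sum>i=1..n. w (X i) * L i * of_bool (s (X i) \<le> t)) \<le> (\<Sum>i=1..n. w (X i) * L i * of_bool (s (X i) \<le> ?S))"
    proof (rule sum_mono)
      fix i assume i: "i \<in> {1..n}"
      have "0 \<le> w (X i) * L i" using L01 wpos i by (simp add: less_imp_le)
      then show "w (X i) * L i * of_bool (s (X i) \<le> t) \<le> w (X i) * L i * of_bool (s (X i) \<le> ?S)"
        using t by (auto intro: mult_left_mono)
    qed
    then show "((\<Sum>i=1..n. w (X i) * L i * of_bool (s (X i) \<le> t)) + w (X (Suc n)) * l) / wtot n X w \<le> ?F ?S l"
      unfolding Fw_def using W by (intro divide_right_mono) auto
  qed
  have E: "ereal (1 / \<alpha>) \<le> Eval n X L s w \<gamma> \<longleftrightarrow> ?Q"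
    using Eval_iff[OF L01 wpos alpha(1)] by simp
  have C1: "?Q \<Longrightarrow> ?F ?S 1 \<le> \<gamma>"
  proof -
    assume Q: ?Q
    have "(1::real) \<in> {0..1}" by simp
    then obtain m where m: "tgam n X L s w \<gamma> 1 = ereal m" "?S \<le> m" using Q by blast
    then have "m \<in> Mset n X s" "?F m 1 \<le> \<gamma>" using tgam_cases[of n X L s w \<gamma> 1] by auto
    then show "?F ?S 1 \<le> \<gamma>" using Fw_mono_t[OF L01 wpos, of 1 ?S m X s] m by force
  qed
  have lemS: "\<And>l. ?F ?S 1 \<le> \<gamma> \<Longrightarrow> l \<in> {0..1} \<Longrightarrow>
      \<exists>m. tgam n X L s w \<gamma> l = ereal m \<and> m \<in> Mset n X s \<and> ?S \<le> m \<and> ?F m l \<le> \<gamma>"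
  proof -
    fix l :: real assume A: "?F ?S 1 \<le> \<gamma>" and l: "l \<in> {0..1}"
    then have "?F ?S l \<le> \<gamma>" using Fw_mono_l[OF wpos, of l 1 n X L s ?S] by auto
    then show "\<exists>m. tgam n X L s w \<gamma> l = ereal m \<and> m \<in> Mset n X s \<and> ?S \<le> m \<and> ?F m l \<le> \<gamma>"
      using tgam_ge[OF SM] by blast
  qed
  have part1: "\<gamma> \<le> \<alpha> \<longrightarrow> (?Q \<longleftrightarrow> ?F ?S 1 \<le> \<gamma>)"
  proof (intro impI iffI)
    assume "?Q" then show "?F ?S 1 \<le> \<gamma>" using C1 by blast
  next
    assume ga: "\<gamma> \<le> \<alpha>" and A: "?F ?S 1 \<le> \<gamma>"
    show ?Q
    proof
      fix l :: real assume "l \<in> {0..1}"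
      then show "\<exists>m. tgam n X L s w \<gamma> l = ereal m \<and> ?S \<le> m \<and> ?F m l \<le> \<alpha>"
        using lemS[OF A] ga by force
    qed
  qed
  let ?G = "\<lambda>t l. ((\<Sum>i=1..n. w (X i) * L i * of_bool (s (X i) \<le> t)) + w (X (Suc n)) * l) / wtot n X w"
  have part2: "\<alpha> < \<gamma> \<longrightarrow> (?Q \<longleftrightarrow> (?F ?S 1 \<le> \<gamma> \<and> (\<forall>t\<in>Mset n X s. \<forall>l\<in>{0..1::real}. ?G t l \<notin> {\<alpha><..\<gamma>})))"
  proof (intro impI iffI conjI)
    assume "?Q" then show "?F ?S 1 \<le> \<gamma>" using C1 by blast
  next
    assume Q: ?Q
    show "\<forall>t\<in>Mset n X s. \<forall>l\<in>{0..1::real}. ?G t l \<notin> {\<alpha><..\<gamma>}"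
    proof (intro ballI notI)
      fix t and l :: real assume tM: "t \<in> Mset n X s" and l: "l \<in> {0..1::real}" and G: "?G t l \<in> {\<alpha><..\<gamma>}"
      obtain m where m: "tgam n X L s w \<gamma> l = ereal m" "?S \<le> m" "?F m l \<le> \<alpha>" using Q l by blast
      have mM: "m \<in> Mset n X s" and mmax: "\<forall>t\<in>Mset n X s. ?F t l \<le> \<gamma> \<longrightarrow> t \<le> m"
        using tgam_cases[of n X L s w \<gamma> l] m(1) by auto
      show False
      proof (cases "?S \<le> t")
        case True
        then have "?F t l \<le> \<gamma>" "\<alpha> < ?F t l" using G GF[OF True, of l] by auto
        then have "t \<le> m" using mmax tM by auto
        then have "?F t l \<le> ?F m l" using Fw_mono_t[OF L01 wpos, of l t m] l by auto
        then show False using m(3) \<open>\<alpha> < ?F t l\<close> by auto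
      next
        case False
        then have "?G t l \<le> ?F ?S l" using GleS[of t l] l by auto
        moreover have "?F ?S l \<le> ?F m l" using Fw_mono_t[OF L01 wpos, of l ?S m] l m(2) by auto
        ultimately show False using m(3) G by auto
      qed
    qed
  next
    assume ag: "\<alpha> < \<gamma>" and H: "?F ?S 1 \<le> \<gamma> \<and> (\<forall>t\<in>Mset n X s. \<forall>l\<in>{0..1::real}. ?G t l \<notin> {\<alpha><..\<gamma>})"
    show ?Q
    proof
      fix l :: real assume l: "l \<in> {0..1}"
      obtain m where m: "tgam n X L s w \<gamma> l = ereal m" "m \<in> Mset n X s" "?S \<le> m" "?F m l \<le> \<gamma>"
        using lemS[OF conjunct1[OF H] l] by blast
      have "?G m l \<notin> {\<alpha><..\<gamma>}" using H m(2) l by blast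
      then have "?F m l \<le> \<alpha>" using GF[OF m(3), of l] m(4) by auto
      then show "\<exists>m. tgam n X L s w \<gamma> l = ereal m \<and> ?S \<le> m \<and> ?F m l \<le> \<alpha>" using m by blast
    qed
  qed
  show ?thesis unfolding Wd Gd Ad E using part1 part2 by blast
qed

end
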